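(* Under the standing assumptions, writing (R1) for the condition $\mathscr{R}(A^*AB)=\mathscr{R}(B)$, the following hold. (33) $\{M^{(1,2,3)}\}\subseteq\{C^{-1}B^{(1)}A^{-1}\}$; and $\{M^{(1,2,3)}\}\supseteq\{C^{-1}B^{(1)}A^{-1}\}\Leftrightarrow\{M^{(1,2,3)}\}=\{C^{-1}B^{(1)}A^{-1}\}\Leftrightarrow r(B)=m$. (34) $\{M^{(1,2,3)}\}\subseteq\{C^{-1}B^{(1,2)}A^{-1}\}$; and $\{M^{(1,2,3)}\}\supseteq\{C^{-1}B^{(1,2)}A^{-1}\}\Leftrightarrow\{M^{(1,2,3)}\}=\{C^{-1}B^{(1,2)}A^{-1}\}\Leftrightarrow B=0$ or $r(B)=m$. (35) $\{M^{(1,2,3)}\}\cap\{C^{-1}B^{(1,3)}A^{-1}\}\neq\emptyset\Leftrightarrow\{M^{(1,2,3)}\}\subseteq\{C^{-1}B^{(1,3)}A^{-1}\}\Leftrightarrow$ (R1); and $\{M^{(1,2,3)}\}\supseteq\{C^{-1}B^{(1,3)}A^{-1}\}\Leftrightarrow\{M^{(1,2,3)}\}=\{C^{-1}B^{(1,3)}A^{-1}\}\Leftrightarrow$ (R1) and $r(B)=\min\{m,n\}$. (36) $\{M^{(1,2,3)}\}\cap\{C^{-1}B^{(1,4)}A^{-1}\}\neq\emptyset$; $\{M^{(1,2,3)}\}\supseteq\{C^{-1}B^{(1,4)}A^{-1}\}\Leftrightarrow r(B)=m$; $\{M^{(1,2,3)}\}\subseteq\{C^{-1}B^{(1,4)}A^{-1}\}\Leftrightarrow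 B=0$ or $r(B)=n$; $\{M^{(1,2,3)}\}=\{C^{-1}B^{(1,4)}A^{-1}\}\Leftrightarrow r(B)=m=n$. (37) $\{M^{(1,2,3)}\}\cap\{C^{-1}B^{(1,2,3)}A^{-1}\}\neq\emptyset\Leftrightarrow\{M^{(1,2,3)}\}=\{C^{-1}B^{(1,2,3)}A^{-1}\}\Leftrightarrow$ (R1). (38) $\{M^{(1,2,3)}\}\cap\{C^{-1}B^{(1,2,4)}A^{-1}\}\neq\emptyset$; $\{M^{(1,2,3)}\}\supseteq\{C^{-1}B^{(1,2,4)}A^{-1}\}\Leftrightarrow B=0$ or $r(B)=m$; $\{M^{(1,2,3)}\}\subseteq\{C^{-1}B^{(1,2,4)}A^{-1}\}\Leftrightarrow B=0$ or $r(B)=n$; $\{M^{(1,2,3)}\}=\{C^{-1}B^{(1,2,4)}A^{-1}\}\Leftrightarrow B=0$ or $r(B)=m=n$. (39) $\{M^{(1,2,3)}\}\cap\{C^{-1}B^{(1,3,4)}A^{-1}\}\neq\emptyset\Leftrightarrow$ (R1); $\{M^{(1,2,3)}\}\supseteq\{C^{-1}B^{(1,3,4)}A^{-1}\}\Leftrightarrow$ (R1) and $r(B)=\min\{m,n\}$; $\{M^{(1,2,3)}\}\subseteq\{C^{-1}B^{(1,3,4)}A^{-1}\}\Leftrightarrow B=0$ or ((R1) and $r(B)=n$); $\{M^{(1,2,3)}\}=\{C^{-1}B^{(1,3,4)}A^{-1}\}\Leftrightarrow$ (R1) and $r(B)=n$. (40) $C^{-1}B^\dagger A^{-1}\in\{M^{(1,2,3)}\}\Leftrightarrow$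 (R1).
   Context: Standing assumptions: $m,n\ge1$; $A\in\mathbb{C}^{m\times m}$ and $C\in\mathbb{C}^{n\times n}$ are nonsingular; $B\in\mathbb{C}^{m\times n}$; $M=ABC$. For a complex matrix $X$, $X^*$ is its conjugate transpose, $r(X)$ its rank and $\mathscr{R}(X)$ its column space. For $X\in\mathbb{C}^{p\times q}$, a matrix $G\in\mathbb{C}^{q\times p}$ is called an $\{i,\ldots,j\}$-generalized inverse of $X$ (written $X^{(i,\ldots,j)}$) if it satisfies the equations numbered $i,\ldots,j$ among the four Penrose equations (i) $XGX=X$, (ii) $GXG=G$, (iii) $(XG)^*=XG$, (iv) $(GX)^*=GX$; $\{X^{(i,\ldots,j)}\}$ denotes the set of all such $G$. The Moore–Penrose inverse $X^\dagger$ is the unique matrix satisfying all four equations. For a type $(k,\ldots,l)$, $\{C^{-1}B^{(k,\ldots,l)}A^{-1}\}:=\{C^{-1}GA^{-1}: G\in\{B^{(k,\ldots,l)}\}\}$. *)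

theory Defs
  imports "HOL-Analysis.Analysis"
begin

definition ctrans :: "complex^'n^'m \<Rightarrow> complex^'m^'n" where
  "ctrans X = (\<chi> i j. cnj (X $ j $ i))"

definition colspace :: "complex^'n^'m \<Rightarrow> (complex^'m) set" where
  "colspace X = range (\<lambda>x. X *v x)"

definition gen_inv :: "nat set \<Rightarrow> complex^'n^'m \<Rightarrow> (complex^'m^'n) set" where
  "gen_inv S X = {G.
      (1 \<in> S \<longrightarrow> X ** G ** X = X) \<and>
      (2 \<in> S \<longrightarrow> G ** X ** G = G) \<and>
      (3 \<in> S \<longrightarrow> ctrans (X ** G) = X ** G) \<and>
      (4 \<in> S \<longrightarrow> ctrans (G ** X) = G ** X)}"

definition mp_inv :: "complex^'n^'m \<Rightarrow> complex^'m^'n" where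
  "mp_inv X = (THE G. G \<in> gen_inv {1,2,3,4} X)"

definition tr_set :: "complex^'m^'m \<Rightarrow> complex^'n^'m \<Rightarrow> complex^'n^'n \<Rightarrow> nat set \<Rightarrow> (complex^'m^'n) set" where
  "tr_set A B C S = (\<lambda>G. matrix_inv C ** G ** matrix_inv A) ` gen_inv S B"

end

theory Submission
  imports Defs
begin


lemma ctrans_nth[simp]: "ctrans X $ i $ j = cnj (X $ j $ i)"
  by (simp add: ctrans_def)

lemma ctrans_ctrans[simp]: "ctrans (ctrans X) = X"
  by (simp add: vec_eq_iff)

lemma ctrans_mult: "ctrans (X ** Y) = ctrans Y ** ctrans X"
  by (simp add: vec_eq_iff matrix_matrix_mult_def mult.commute)

lemma ctrans_mat1[simp]: "ctrans (mat 1 :: complex^'n^'n) = mat 1"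
  by (simp add: vec_eq_iff mat_def)

lemma ctrans_0[simp]: "ctrans (0 :: complex^'n^'m) = 0"
  by (simp add: vec_eq_iff)

lemma ctrans_add: "ctrans (X + Y) = ctrans X + ctrans Y"
  by (simp add: vec_eq_iff)

lemma ctrans_diff: "ctrans (X - Y) = ctrans X - ctrans Y"
  by (simp add: vec_eq_iff)

lemma ctrans_eq_iff: "ctrans X = ctrans Y \<longleftrightarrow> X = Y"
  by (metis ctrans_ctrans)

lemma ctrans_self_zero:
  fixes Z :: "complex^'n^'m"
  assumes "ctrans Z ** Z = 0" shows "Z = 0"
proof -
  { fix i j
    have "(ctrans Z ** Z) $ j $ j = (\<Sum>k\<in>UNIV. cnj (Z $ k $ j) * Z $ k $ j)"
      by (simp add: matrix_matrix_mult_def)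
    also have "\<dots> = (\<Sum>k\<in>UNIV. complex_of_real ((cmod (Z $ k $ j))\<^sup>2))"
      by (rule sum.cong[OF refl]) (metis complex_norm_square mult.commute)
    also have "\<dots> = complex_of_real (\<Sum>k\<in>UNIV. (cmod (Z $ k $ j))\<^sup>2)"
      by (rule of_real_sum[symmetric])
    finally have "complex_of_real (\<Sum>k\<in>UNIV. (cmod (Z $ k $ j))\<^sup>2) = 0"
      using assms by simp
    hence "(\<Sum>k\<in>UNIV. (cmod (Z $ k $ j))\<^sup>2) = 0"
      by (simp only: of_real_eq_0_iff)
    hence "(cmod (Z $ i $ j))\<^sup>2 = 0"
      using sum_nonneg_eq_0_iff[of UNIV "\<lambda>k. (cmod (Z $ k $ j))\<^sup>2"] by simp
    hence "Z $ i $ j = 0" by simp }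
  thus ?thesis by (simp add: vec_eq_iff)
qed

lemma inv_left: "invertible A \<Longrightarrow> matrix_inv A ** A = mat 1"
  unfolding invertible_def matrix_inv_def by (metis (mono_tags, lifting) someI_ex)
lemma inv_right: "invertible A \<Longrightarrow> A ** matrix_inv A = mat 1"
  unfolding invertible_def matrix_inv_def by (metis (mono_tags, lifting) someI_ex)

lemma ctrans_inv:
  fixes A :: "complex^'m^'m"
  assumes "invertible A"
  shows "ctrans (matrix_inv A) ** ctrans A = mat 1" "ctrans A ** ctrans (matrix_inv A) = mat 1"
  by (metis assms ctrans_mat1 ctrans_mult inv_right inv_left)+


lemma matrix_diff_ldistrib: "(A::'a::ring_1^'n^'m) ** (B - C) = A ** B - A ** C"
  by (simp add: matrix_matrix_mult_def vec_eq_iff sum_subtractf ring_distribs)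
lemma matrix_diff_rdistrib: "((B::'a::ring_1^'n^'m) - C) ** A = B ** A - C ** A"
  by (simp add: matrix_matrix_mult_def vec_eq_iff sum_subtractf ring_distribs)
lemma matrix_add_rdistrib: "((B::'a::ring_1^'n^'m) + C) ** A = B ** A + C ** A"
  by (simp add: matrix_matrix_mult_def vec_eq_iff sum.distrib ring_distribs)

lemma g1_exists: fixes B :: "'a::field^'n^'m" shows "\<exists>G. B ** G ** B = B"
proof -
  obtain g where g: "Vector_Spaces.linear (*s) (*s) g" "\<forall>v\<in>range ((*v) B). B *v g v = v"
    using vec.linear_exists_right_inverse_on[OF matrix_vector_mul_linear_gen[of B] vec.subspace_UNIV]
    by blast
  have "B ** matrix g ** B = B"
    unfolding matrix_eq
    using g by (simp add: matrix_vector_mul_assoc[symmetric] matrix_works)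
  thus ?thesis by blast
qed

lemma gram_cancel:
  fixes B :: "complex^'n^'m" and U V :: "complex^'p^'n"
  assumes "ctrans B ** B ** U = ctrans B ** B ** V" shows "B ** U = B ** V"
proof -
  have "ctrans B ** B ** (U - V) = 0"
    using assms by (simp add: matrix_diff_ldistrib)
  hence "ctrans (U - V) ** (ctrans B ** B ** (U - V)) = 0" by simp
  hence "ctrans (B ** (U - V)) ** (B ** (U - V)) = 0"
    by (simp add: ctrans_mult matrix_mul_assoc)
  hence "B ** (U - V) = 0" by (rule ctrans_self_zero)
  thus ?thesis by (simp add: matrix_diff_ldistrib)
qed

lemma g13_exists:
  fixes B :: "complex^'n^'m"
  shows "\<exists>Y. B ** Y ** B = B \<and> ctrans (B ** Y) = B ** Y"
proof -
  obtain G where G: "ctrans B ** B ** G ** (ctrans B ** B) = ctrans B ** B"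
    using g1_exists by blast
  have G': "ctrans B ** B ** ctrans G ** (ctrans B ** B) = ctrans B ** B"
    using arg_cong[OF G, of ctrans] by (simp add: ctrans_mult matrix_mul_assoc)
  have e1: "B ** (G ** ctrans B ** B) = B ** mat 1"
    by (rule gram_cancel) (use G in \<open>simp add: matrix_mul_assoc\<close>)
  have e2: "B ** (ctrans G ** ctrans B ** B) = B ** mat 1"
    by (rule gram_cancel) (use G' in \<open>simp add: matrix_mul_assoc\<close>)
  have e3: "ctrans B ** B ** ctrans G ** ctrans B = ctrans B"
    using arg_cong[OF e1, of ctrans] by (simp add: ctrans_mult matrix_mul_assoc)
  have "B ** G ** ctrans B = B ** G ** (ctrans B ** B ** ctrans G ** ctrans B)"
    using e3 by simp
  also have "\<dots> = B ** (G ** ctrans B ** B) ** ctrans G ** ctrans B"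
    by (simp add: matrix_mul_assoc)
  also have "\<dots> = B ** ctrans G ** ctrans B"
    using e1 by (simp add: matrix_mul_assoc)
  finally have h: "B ** G ** ctrans B = B ** ctrans G ** ctrans B" .
  show ?thesis
    apply (rule exI[of _ "G ** ctrans B"])
    using e1 h by (simp add: matrix_mul_assoc ctrans_mult)
qed

lemma g14_exists:
  fixes B :: "complex^'n^'m"
  shows "\<exists>Y. B ** Y ** B = B \<and> ctrans (Y ** B) = Y ** B"
proof -
  obtain Y where Y: "ctrans B ** Y ** ctrans B = ctrans B" "ctrans (ctrans B ** Y) = ctrans B ** Y"
    using g13_exists by blast
  show ?thesis
    apply (rule exI[of _ "ctrans Y"])
    using arg_cong[OF Y(1), of ctrans] arg_cong[OF Y(2), of ctrans]
    by (simp add: ctrans_mult matrix_mul_assoc)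
qed

lemma mp_unique:
  fixes B :: "complex^'n^'m"
  assumes "Y \<in> gen_inv {1,2,3,4} B" "Z \<in> gen_inv {1,2,3,4} B"
  shows "Y = Z"
proof -
  have Y: "B ** Y ** B = B" "Y ** B ** Y = Y" "ctrans (B ** Y) = B ** Y" "ctrans (Y ** B) = Y ** B"
    using assms(1) by (auto simp: gen_inv_def)
  have Z: "B ** Z ** B = B" "Z ** B ** Z = Z" "ctrans (B ** Z) = B ** Z" "ctrans (Z ** B) = Z ** B"
    using assms(2) by (auto simp: gen_inv_def)
  have a: "B ** Y ** (B ** Z) = B ** Z" using Y(1) by (simp add: matrix_mul_assoc)
  have b: "B ** Z ** (B ** Y) = B ** Y" using Z(1) by (simp add: matrix_mul_assoc)
  have "B ** Y = ctrans (B ** Y)" using Y(3) by simp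
  also have "\<dots> = ctrans (B ** Z ** (B ** Y))" using b by simp
  also have "\<dots> = B ** Y ** (B ** Z)" using Y(3) Z(3) by (simp add: ctrans_mult)
  also have "\<dots> = B ** Z" using a .
  finally have BY: "B ** Y = B ** Z" .
  have c: "Y ** B ** (Z ** B) = Y ** B" using Z(1) by (metis matrix_mul_assoc)
  have d: "Z ** B ** (Y ** B) = Z ** B" using Y(1) by (metis matrix_mul_assoc)
  have "Y ** B = ctrans (Y ** B)" using Y(4) by simp
  also have "\<dots> = ctrans (Y ** B ** (Z ** B))" using c by simp
  also have "\<dots> = Z ** B ** (Y ** B)" using Y(4) Z(4) by (simp add: ctrans_mult)
  also have "\<dots> = Z ** B" using d .
  finally have YB: "Y ** B = Z ** B" .
  have "Y = Y ** (B ** Y)" using Y(2) by (simp add: matrix_mul_assoc)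
  also have "\<dots> = Y ** B ** Z" using BY by (simp add: matrix_mul_assoc)
  also have "\<dots> = Z ** B ** Z" using YB by simp
  also have "\<dots> = Z" using Z(2) .
  finally show ?thesis .
qed

lemma mp_exists:
  fixes B :: "complex^'n^'m"
  shows "\<exists>X. X \<in> gen_inv {1,2,3,4} B"
proof -
  obtain Y1 where Y1: "B ** Y1 ** B = B" "ctrans (B ** Y1) = B ** Y1" using g13_exists by blast
  obtain Y2 where Y2: "B ** Y2 ** B = B" "ctrans (Y2 ** B) = Y2 ** B" using g14_exists by blast
  let ?X = "Y2 ** B ** Y1"
  have "B ** ?X = B ** Y1" using Y2(1) by (simp add: matrix_mul_assoc)
  moreover have "?X ** B = Y2 ** B" using Y1(1) by (metis matrix_mul_assoc)
  moreover have "?X ** B ** ?X = ?X"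
  proof -
    have "?X ** B ** ?X = Y2 ** (B ** Y1 ** B) ** Y2 ** B ** Y1" by (simp add: matrix_mul_assoc)
    also have "\<dots> = Y2 ** (B ** Y2 ** B) ** Y1" using Y1(1) by (simp add: matrix_mul_assoc)
    also have "\<dots> = ?X" using Y2(1) by simp
    finally show ?thesis .
  qed
  ultimately have "?X \<in> gen_inv {1,2,3,4} B"
    using Y1 Y2 unfolding gen_inv_def by (simp add: matrix_mul_assoc)
  thus ?thesis by blast
qed

lemma mp_inv_prop:
  fixes B :: "complex^'n^'m"
  shows "mp_inv B \<in> gen_inv {1,2,3,4} B"
  unfolding mp_inv_def
  using mp_exists[of B] mp_unique[of _ B] by (metis theI)


lemma mat1_nonzero: "(mat 1 :: 'a::zero_neq_one^'k^'k) \<noteq> 0"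
proof
  assume "(mat 1 :: 'a^'k^'k) = 0"
  hence "(mat 1 :: 'a^'k^'k) $ undefined $ undefined = 0" by simp
  thus False by (simp add: mat_def)
qed

lemma sandwich_nonzero:
  fixes U :: "'a::field^'q^'p" and V :: "'a^'s^'r"
  assumes "U \<noteq> 0" "V \<noteq> 0"
  shows "\<exists>Z::'a^'r^'q. U ** Z ** V \<noteq> 0"
proof -
  obtain i j where ij: "U $ i $ j \<noteq> 0" using assms(1) by (metis vec_eq_iff zero_index)
  obtain k l where kl: "V $ k $ l \<noteq> 0" using assms(2) by (metis vec_eq_iff zero_index)
  let ?Z = "(\<chi> a b. if a = j \<and> b = k then 1 else 0) :: 'a^'r^'q"
  have "(U ** ?Z) $ i $ b = (if b = k then U $ i $ j else 0)" for b
    by (simp add: matrix_matrix_mult_def if_distrib[of "\<lambda>x. _ * x"] sum.delta cong: if_cong)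
  hence "(U ** ?Z ** V) $ i $ l = U $ i $ j * V $ k $ l"
    by (simp add: matrix_matrix_mult_def[of "U ** ?Z"] if_distrib[of "\<lambda>x. x * _"] sum.delta cong: if_cong)
  hence "(U ** ?Z ** V) $ i $ l \<noteq> 0" using ij kl by simp
  hence "U ** ?Z ** V \<noteq> 0" by (metis zero_index)
  thus ?thesis by blast
qed

lemma matrix_eq_cancel_left:
  assumes "L ** A = mat 1" "A ** U = A ** V" shows "U = V"
  by (metis assms matrix_mul_assoc matrix_mul_lid)

lemma matrix_eq_cancel_right:
  assumes "A ** R = mat 1" "U ** A = V ** A" shows "U = V"
  by (metis assms matrix_mul_assoc matrix_mul_rid)


locale gsetup =
  fixes A :: "complex^'m^'m" and B :: "complex^'n^'m"
  assumes invA: "invertible A"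
begin

definition "X = mp_inv B"
definition "E = B ** X"
definition "F = X ** B"
definition "Ai = matrix_inv A"
definition "S = {Y. B ** Y ** B = B \<and> Y ** B ** Y = Y \<and>
      ctrans (A ** B ** Y ** Ai) = A ** B ** Y ** Ai}"

lemma AiA: "Ai ** A = mat 1" and AAi: "A ** Ai = mat 1"
  using inv_left[OF invA] inv_right[OF invA] by (simp_all add: Ai_def)

lemma X: "B ** X ** B = B" "X ** B ** X = X" "ctrans (B ** X) = B ** X" "ctrans (X ** B) = X ** B"
  using mp_inv_prop[of B] by (auto simp: gen_inv_def X_def)

lemma EB: "E ** B = B" using X by (simp add: E_def)
lemma BF: "B ** F = B" using X by (simp add: F_def matrix_mul_assoc)
lemma XE: "X ** E = X" using X by (simp add: E_def matrix_mul_assoc)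
lemma FX: "F ** X = X" using X by (simp add: F_def)
lemma EE: "E ** E = E" using X by (simp add: E_def matrix_mul_assoc)
lemma FF: "F ** F = F" using X by (simp add: F_def matrix_mul_assoc)
lemma Eh: "ctrans E = E" using X by (simp add: E_def)
lemma Fh: "ctrans F = F" using X by (simp add: F_def)

lemma proj_l:
  assumes "B ** U ** B = B" "B ** V ** B = B" "ctrans (B ** U) = B ** U" "ctrans (B ** V) = B ** V"
  shows "B ** U = B ** V"
proof -
  have a: "B ** U ** (B ** V) = B ** V" using assms(1) by (simp add: matrix_mul_assoc)
  have b: "B ** V ** (B ** U) = B ** U" using assms(2) by (simp add: matrix_mul_assoc)
  have "B ** U = ctrans (B ** U)" using assms(3) by simp
  also have "\<dots> = ctrans (B ** V ** (B ** U))" using b by simp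
  also have "\<dots> = B ** U ** (B ** V)" using assms(3,4) by (simp add: ctrans_mult)
  also have "\<dots> = B ** V" using a .
  finally show ?thesis .
qed

lemma proj_r:
  assumes "B ** U ** B = B" "B ** V ** B = B" "ctrans (U ** B) = U ** B" "ctrans (V ** B) = V ** B"
  shows "U ** B = V ** B"
proof -
  have c: "U ** B ** (V ** B) = U ** B" using assms(2) by (metis matrix_mul_assoc)
  have d: "V ** B ** (U ** B) = V ** B" using assms(1) by (metis matrix_mul_assoc)
  have "U ** B = ctrans (U ** B)" using assms(3) by simp
  also have "\<dots> = ctrans (U ** B ** (V ** B))" using c by simp
  also have "\<dots> = V ** B ** (U ** B)" using assms(3,4) by (simp add: ctrans_mult)
  also have "\<dots> = V ** B" using d .
  finally show ?thesis .
qed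

lemma T1: "gen_inv {1} B = {Y. B ** Y ** B = B}"
  by (auto simp: gen_inv_def)
lemma T12: "gen_inv {1,2} B = {Y. B ** Y ** B = B \<and> Y ** B ** Y = Y}"
  by (auto simp: gen_inv_def)
lemma T13: "gen_inv {1,3} B = {Y. B ** Y = E}"
proof -
  have "B ** Y = E" if "B ** Y ** B = B" "ctrans (B ** Y) = B ** Y" for Y
    using proj_l[OF that(1) X(1) that(2) X(3)] by (simp add: E_def)
  moreover have "B ** Y ** B = B \<and> ctrans (B ** Y) = B ** Y" if "B ** Y = E" for Y
    using that EB Eh by simp
  moreover have "gen_inv {1,3} B = {Y. B ** Y ** B = B \<and> ctrans (B ** Y) = B ** Y}"
    by (auto simp: gen_inv_def)
  ultimately show ?thesis by blast
qed
lemma T14: "gen_inv {1,4} B = {Y. Y ** B = F}"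
proof -
  have "Y ** B = F" if "B ** Y ** B = B" "ctrans (Y ** B) = Y ** B" for Y
    using proj_r[OF that(1) X(1) that(2) X(4)] by (simp add: F_def)
  moreover have "B ** Y ** B = B \<and> ctrans (Y ** B) = Y ** B" if "Y ** B = F" for Y
    using that BF Fh by (simp add: matrix_mul_assoc[symmetric])
  moreover have "gen_inv {1,4} B = {Y. B ** Y ** B = B \<and> ctrans (Y ** B) = Y ** B}"
    by (auto simp: gen_inv_def)
  ultimately show ?thesis by blast
qed
lemma T123: "gen_inv {1,2,3} B = {Y. B ** Y = E \<and> Y ** B ** Y = Y}"
proof -
  have "gen_inv {1,2,3} B = gen_inv {1,3} B \<inter> {Y. Y ** B ** Y = Y}" by (auto simp: gen_inv_def)
  thus ?thesis unfolding T13 by blast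
qed
lemma T124: "gen_inv {1,2,4} B = {Y. Y ** B = F \<and> Y ** B ** Y = Y}"
proof -
  have "gen_inv {1,2,4} B = gen_inv {1,4} B \<inter> {Y. Y ** B ** Y = Y}" by (auto simp: gen_inv_def)
  thus ?thesis unfolding T14 by blast
qed
lemma T134: "gen_inv {1,3,4} B = {Y. B ** Y = E \<and> Y ** B = F}"
proof -
  have "gen_inv {1,3,4} B = gen_inv {1,3} B \<inter> gen_inv {1,4} B" by (auto simp: gen_inv_def)
  thus ?thesis unfolding T13 T14 by blast
qed

end


context gsetup begin

definition "D = mat 1 - E"
definition "D' = mat 1 - F"

lemma BX: "B ** X = E" by (simp add: E_def)
lemma XB: "X ** B = F" by (simp add: F_def)

lemma alg0:
  "E ** B = B" "B ** F = B" "X ** E = X" "F ** X = X" "E ** E = E" "F ** F = F"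
  "D ** B = 0" "B ** D' = 0" "F ** D' = 0" "D ** E = 0" "X ** D = 0" "D' ** X = 0"
  "E ** D = 0" "D' ** F = 0"
  using EB BF XE FX EE FF
  by (simp_all add: D_def D'_def matrix_diff_ldistrib matrix_diff_rdistrib)

lemma alg0w:
  "\<And>W. W ** E ** B = W ** B" "\<And>W. W ** B ** F = W ** B" "\<And>W. W ** X ** E = W ** X" "\<And>W. W ** F ** X = W ** X"
  "\<And>W. W ** E ** E = W ** E" "\<And>W. W ** F ** F = W ** F"
  "\<And>W. W ** D ** B = 0" "\<And>W. W ** B ** D' = 0" "\<And>W. W ** F ** D' = 0" "\<And>W. W ** D ** E = 0" "\<And>W. W ** X ** D = 0"
  "\<And>W. W ** D' ** X = 0" "\<And>W. W ** E ** D = 0" "\<And>W. W ** D' ** F = 0"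
  "\<And>W. W ** B ** X = W ** E" "\<And>W. W ** X ** B = W ** F"
  using alg0 BX XB by (simp_all add: matrix_mul_assoc[symmetric])

lemmas alg = alg0 alg0w BX XB matrix_mul_assoc matrix_add_ldistrib matrix_add_rdistrib

lemma Y0: "mp_inv (A ** B) ** A \<in> S"
proof -
  define Xn where "Xn = mp_inv (A ** B)"
  have N: "A ** B ** Xn ** (A ** B) = A ** B" "Xn ** (A ** B) ** Xn = Xn"
      "ctrans (A ** B ** Xn) = A ** B ** Xn"
    using mp_inv_prop[of "A ** B"] by (auto simp: gen_inv_def Xn_def)
  have "A ** (B ** (Xn ** A) ** B) = A ** B" using N(1) by (simp add: matrix_mul_assoc)
  hence 1: "B ** (Xn ** A) ** B = B" by (rule matrix_eq_cancel_left[OF AiA])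
  have 2: "Xn ** A ** B ** (Xn ** A) = Xn ** A" using N(2) by (simp add: matrix_mul_assoc)
  have "A ** B ** (Xn ** A) ** Ai = A ** B ** Xn ** (A ** Ai)" by (simp add: matrix_mul_assoc)
  hence 3: "A ** B ** (Xn ** A) ** Ai = A ** B ** Xn" by (simp add: AAi)
  show ?thesis unfolding S_def Xn_def[symmetric] using 1 2 3 N(3) by simp
qed

lemma S_unique:
  assumes "Y1 \<in> S" "Y2 \<in> S" shows "B ** Y1 = B ** Y2"
proof -
  have Y1: "B ** Y1 ** B = B" "ctrans (A ** B ** Y1 ** Ai) = A ** B ** Y1 ** Ai"
    using assms(1) by (auto simp: S_def)
  have Y2: "B ** Y2 ** B = B" "ctrans (A ** B ** Y2 ** Ai) = A ** B ** Y2 ** Ai"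
    using assms(2) by (auto simp: S_def)
  define Q1 where "Q1 = A ** B ** Y1 ** Ai"
  define Q2 where "Q2 = A ** B ** Y2 ** Ai"
  have "Q1 ** Q2 = A ** (B ** Y1 ** (Ai ** A) ** B) ** Y2 ** Ai"
    by (simp add: Q1_def Q2_def matrix_mul_assoc)
  hence a: "Q1 ** Q2 = Q2" using Y1(1) by (simp add: AiA Q2_def matrix_mul_assoc)
  have "Q2 ** Q1 = A ** (B ** Y2 ** (Ai ** A) ** B) ** Y1 ** Ai"
    by (simp add: Q1_def Q2_def matrix_mul_assoc)
  hence b: "Q2 ** Q1 = Q1" using Y2(1) by (simp add: AiA Q1_def matrix_mul_assoc)
  have "Q1 = ctrans Q1" using Y1(2) by (simp add: Q1_def)
  also have "\<dots> = ctrans (Q2 ** Q1)" using b by simp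
  also have "\<dots> = Q1 ** Q2" using Y1(2) Y2(2) by (simp add: ctrans_mult Q1_def Q2_def)
  also have "\<dots> = Q2" using a .
  finally have "A ** (B ** Y1) ** Ai = A ** (B ** Y2) ** Ai"
    by (simp add: Q1_def Q2_def matrix_mul_assoc)
  hence "A ** (B ** Y1) = A ** (B ** Y2)"
    by (rule matrix_eq_cancel_right[OF AiA])
  thus ?thesis by (rule matrix_eq_cancel_left[OF AiA])
qed

definition "P = B ** (SOME Y. Y \<in> S)"

lemma SP: "(SOME Y. Y \<in> S) \<in> S" using Y0 by (metis someI)

lemma PB: "P ** B = B"
  using SP by (simp add: P_def S_def)

lemma P_herm: "ctrans (A ** P ** Ai) = A ** P ** Ai"
  using SP by (simp add: P_def S_def matrix_mul_assoc)

lemma S_char: "S = {Y. B ** Y = P \<and> Y ** B ** Y = Y}"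
proof safe
  fix Y assume Y: "Y \<in> S"
  show "B ** Y = P" unfolding P_def by (rule S_unique[OF Y SP])
  show "Y ** B ** Y = Y" using Y by (simp add: S_def)
next
  fix Y assume Y: "B ** Y = P" "Y ** B ** Y = Y"
  have 1: "B ** Y ** B = B" using Y PB by simp
  have "A ** B ** Y ** Ai = A ** P ** Ai" using Y(1) by (metis matrix_mul_assoc)
  thus "Y \<in> S" unfolding S_def using 1 Y(2) P_herm by simp
qed

lemma alg1: "E ** P = P" "P ** E = E" "P ** P = P"
  "\<And>W. W ** E ** P = W ** P" "\<And>W. W ** P ** E = W ** E" "\<And>W. W ** P ** P = W ** P" "\<And>W. W ** P ** B = W ** B"
proof -
  show 1: "E ** P = P" unfolding P_def using X(1) by (simp add: E_def matrix_mul_assoc)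
  show 2: "P ** E = E" using PB by (simp add: E_def matrix_mul_assoc)
  show 3: "P ** P = P" using PB by (simp add: P_def matrix_mul_assoc)
  show "\<And>W. W ** E ** P = W ** P" "\<And>W. W ** P ** E = W ** E" "\<And>W. W ** P ** P = W ** P" "\<And>W. W ** P ** B = W ** B"
    using 1 2 3 PB by (simp_all add: matrix_mul_assoc[symmetric])
qed

lemmas algP = alg alg1 PB

end


lemma exists_nonzero: "\<exists>Z::'a::zero_neq_one^'b^'c. Z \<noteq> 0"
proof
  show "(\<chi> i j. (1::'a)) \<noteq> (0::'a^'b^'c)" by (simp add: vec_eq_iff)
qed

context gsetup begin

lemma B0: assumes "B = 0" shows "X = 0" "E = 0" "F = 0" "P = 0" "S = {0}"
proof -
  show x: "X = 0" using X(2) assms by simp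
  show "E = 0" unfolding E_def using assms by simp
  show "F = 0" unfolding F_def using assms by simp
  show "P = 0" unfolding P_def using assms by simp
  have "S = {Y. B ** Y = P \<and> Y ** B ** Y = Y}" by (rule S_char)
  also have "\<dots> = {0}" using assms \<open>P = 0\<close> by auto
  finally show "S = {0}" .
qed

lemma Em_nz: "E = mat 1 \<Longrightarrow> B \<noteq> 0" using B0(2) mat1_nonzero by metis
lemma Fn_nz: "F = mat 1 \<Longrightarrow> B \<noteq> 0" using B0(3) mat1_nonzero by metis

lemma D0: "D = 0 \<longleftrightarrow> E = mat 1" by (auto simp: D_def)
lemma D'0: "D' = 0 \<longleftrightarrow> F = mat 1" by (auto simp: D'_def)

lemma S_ne: "S \<noteq> {}" using SP by blast

lemma S_T12: "S \<subseteq> gen_inv {1,2} B" unfolding T12 S_char using PB by auto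
lemma S_T1: "S \<subseteq> gen_inv {1} B" unfolding T1 S_char using PB by auto

lemma Em_T1: assumes "E = mat 1" shows "gen_inv {1} B \<subseteq> S"
proof
  fix Y assume "Y \<in> gen_inv {1} B"
  hence Y: "B ** Y ** B = B" unfolding T1 by simp
  have "B ** Y = B ** Y ** E" using assms by simp
  also have "\<dots> = E" using Y by (simp add: E_def matrix_mul_assoc)
  finally have BY: "B ** Y = E" .
  have "P = E" using alg1(2) assms by simp
  thus "Y \<in> S" using BY assms by (simp add: S_char matrix_mul_assoc[symmetric])
qed

lemma Fn_T1: assumes "F = mat 1" "B ** Y ** B = B" shows "Y ** B = F"
proof -
  have "Y ** B = F ** (Y ** B)" using assms by simp
  also have "\<dots> = F" using assms(2) unfolding F_def by (metis matrix_mul_assoc)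
  finally show ?thesis .
qed

lemma XP: "X ** P \<in> S" "X ** P \<in> gen_inv {1,4} B" "X ** P \<in> gen_inv {1,2,4} B"
  unfolding S_char T14 T124 by (simp_all add: algP)

lemma Xin: "X \<in> gen_inv {1} B" "X \<in> gen_inv {1,2} B" "X \<in> gen_inv {1,3} B" "X \<in> gen_inv {1,4} B"
  "X \<in> gen_inv {1,2,4} B" "X \<in> gen_inv {1,3,4} B" "X \<in> gen_inv {1,2,3} B"
  unfolding T1 T12 T13 T14 T124 T134 T123 by (simp_all add: algP)

lemma fam1: "X + Z ** D \<in> gen_inv {1} B" "X + Z ** D \<in> gen_inv {1,4} B"
  "B ** (X + Z ** D) = E + B ** Z ** D"
  unfolding T1 T14 by (simp_all add: algP)

lemma fam2: "X + F ** Z ** D \<in> gen_inv {1,2,4} B" "X + F ** Z ** D \<in> gen_inv {1,2} B"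
  "B ** (X + F ** Z ** D) = E + B ** Z ** D"
  unfolding T124 T12 by (simp_all add: algP)

lemma fam3: "X + D' ** Z ** D \<in> gen_inv {1,3,4} B" "X + D' ** Z ** D \<in> gen_inv {1,3} B"
  "(X + D' ** Z ** D) ** B ** (X + D' ** Z ** D) = X"
  unfolding T134 T13 by (simp_all add: algP)

lemma fam4: "X ** P + D' ** Z ** P \<in> S" "(X ** P + D' ** Z ** P) ** B = F + D' ** Z ** B"
  unfolding S_char by (simp_all add: algP)

lemma S_two: assumes "Y \<in> S" "Y + W \<in> S" shows "B ** W = 0"
  using S_unique[OF assms] by (simp add: matrix_add_ldistrib)

lemma fail1:
  assumes "B \<noteq> 0" "E \<noteq> mat 1" "X \<in> T" "\<And>Z. X + F ** Z ** D \<in> T"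
  shows "\<not> T \<subseteq> S"
proof
  assume TS: "T \<subseteq> S"
  obtain Z where Z: "B ** Z ** D \<noteq> 0" using sandwich_nonzero[of B D] assms(1,2) D0 by blast
  have "B ** (F ** Z ** D) = 0" using S_two[of X "F ** Z ** D"] TS assms(3,4) by blast
  thus False using Z by (simp add: algP)
qed

lemma fail2:
  assumes "E \<noteq> mat 1" "X \<in> T" "\<And>Z. X + Z ** D \<in> T"
  shows "\<not> T \<subseteq> S"
proof
  assume TS: "T \<subseteq> S"
  show False
  proof (cases "B = 0")
    case True
    have "D = mat 1" using B0(2)[OF True] by (simp add: D_def)
    obtain Z :: "complex^'m^'n" where "Z \<noteq> 0" using exists_nonzero by blast
    moreover have "X + Z ** D \<in> S" using TS assms(3) by blast
    ultimately show False using B0[OF True] \<open>D = mat 1\<close> by simp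
  next
    case False
    obtain Z where Z: "B ** Z ** D \<noteq> 0" using sandwich_nonzero[of B D] False assms(1) D0 by blast
    have "B ** (Z ** D) = 0" using S_two[of X "Z ** D"] TS assms(2,3) by blast
    thus False using Z by (simp add: matrix_mul_assoc)
  qed
qed

lemma fail3:
  assumes "E \<noteq> mat 1" "F \<noteq> mat 1" "\<And>Z. X + D' ** Z ** D \<in> T"
  shows "\<not> T \<subseteq> S"
proof
  assume TS: "T \<subseteq> S"
  obtain Z where Z: "D' ** Z ** D \<noteq> 0" using sandwich_nonzero[of D' D] assms(1,2) D0 D'0 by blast
  have "X + D' ** Z ** D \<in> S" using TS assms(3) by blast
  hence "(X + D' ** Z ** D) ** B ** (X + D' ** Z ** D) = X + D' ** Z ** D" by (simp add: S_char)
  thus False using fam3(3)[of Z] Z by simp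
qed

end


context gsetup begin

lemma L33: "S = gen_inv {1} B \<longleftrightarrow> E = mat 1"
proof
  assume "S = gen_inv {1} B"
  thus "E = mat 1" using fail2[of "gen_inv {1} B"] Xin(1) fam1(1) by blast
next
  assume "E = mat 1" thus "S = gen_inv {1} B" using Em_T1 S_T1 by blast
qed

lemma T12_T1: "gen_inv {1,2} B \<subseteq> gen_inv {1} B" unfolding T1 T12 by blast
lemma T14_T1: "gen_inv {1,4} B \<subseteq> gen_inv {1} B" unfolding T1 T14 using BF
  by (auto simp: matrix_mul_assoc[symmetric])
lemma T13_T1: "gen_inv {1,3} B \<subseteq> gen_inv {1} B" unfolding T1 T13 using EB by auto
lemma T124_T14: "gen_inv {1,2,4} B \<subseteq> gen_inv {1,4} B" unfolding T124 T14 by blast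
lemma T134_T13: "gen_inv {1,3,4} B \<subseteq> gen_inv {1,3} B" unfolding T134 T13 by blast
lemma T134_T14: "gen_inv {1,3,4} B \<subseteq> gen_inv {1,4} B" unfolding T134 T14 by blast
lemma T124_eq: "gen_inv {1,2,4} B = gen_inv {1,4} B \<inter> gen_inv {1,2} B"
  unfolding T124 T14 T12 using BF by (auto simp: matrix_mul_assoc[symmetric])
lemma T134_eq: "gen_inv {1,3,4} B = gen_inv {1,3} B \<inter> gen_inv {1,4} B"
  unfolding T134 T14 T13 by auto

lemma L34: "S = gen_inv {1,2} B \<longleftrightarrow> B = 0 \<or> E = mat 1"
proof
  assume h: "S = gen_inv {1,2} B"
  show "B = 0 \<or> E = mat 1" using fail1[of "gen_inv {1,2} B"] h Xin(2) fam2(2) by blast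
next
  assume "B = 0 \<or> E = mat 1"
  thus "S = gen_inv {1,2} B"
  proof
    assume B: "B = 0"
    have "gen_inv {1,2} B = {Y. B ** Y ** B = B \<and> Y ** B ** Y = Y}" by (rule T12)
    also have "\<dots> = {0}" using B by auto
    finally show ?thesis using B0(5)[OF B] by simp
  next
    assume "E = mat 1" thus ?thesis using Em_T1 S_T12 T12_T1 by blast
  qed
qed

lemma L35a: "S \<inter> gen_inv {1,3} B \<noteq> {} \<longleftrightarrow> P = E"
proof
  assume "S \<inter> gen_inv {1,3} B \<noteq> {}"
  then obtain Y where "Y \<in> S" "Y \<in> gen_inv {1,3} B" by blast
  thus "P = E" unfolding S_char T13 by auto
next
  assume "P = E" thus "S \<inter> gen_inv {1,3} B \<noteq> {}" using S_ne unfolding S_char T13 by auto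
qed

lemma L35b: "S \<subseteq> gen_inv {1,3} B \<longleftrightarrow> P = E"
  using L35a S_ne unfolding S_char T13 by auto

lemma L35c: "gen_inv {1,3} B \<subseteq> S \<longleftrightarrow> P = E \<and> (E = mat 1 \<or> F = mat 1)"
proof
  assume h: "gen_inv {1,3} B \<subseteq> S"
  hence "P = E" using L35a Xin(3) by blast
  moreover have "E = mat 1 \<or> F = mat 1" using fail3[of "gen_inv {1,3} B"] h fam3(2) by blast
  ultimately show "P = E \<and> (E = mat 1 \<or> F = mat 1)" by blast
next
  assume h: "P = E \<and> (E = mat 1 \<or> F = mat 1)"
  show "gen_inv {1,3} B \<subseteq> S"
  proof (cases "E = mat 1")
    case True thus ?thesis using Em_T1 T13_T1 by blast
  next
    case False
    hence Fn: "F = mat 1" using h by blast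
    show ?thesis
    proof
      fix Y assume "Y \<in> gen_inv {1,3} B"
      hence BY: "B ** Y = E" unfolding T13 by simp
      have "Y = F ** Y" using Fn by simp
      also have "\<dots> = X" using BY by (simp add: F_def XE matrix_mul_assoc[symmetric])
      finally have "Y = X" .
      thus "Y \<in> S" using h X(2) by (simp add: S_char BX)
    qed
  qed
qed

lemma L36a: "S \<inter> gen_inv {1,4} B \<noteq> {}" using XP by blast

lemma L36b: "gen_inv {1,4} B \<subseteq> S \<longleftrightarrow> E = mat 1"
  using fail2[of "gen_inv {1,4} B"] Xin(4) fam1(2) Em_T1 T14_T1 by blast

lemma L36c: "S \<subseteq> gen_inv {1,4} B \<longleftrightarrow> B = 0 \<or> F = mat 1"
proof
  assume h: "S \<subseteq> gen_inv {1,4} B"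
  show "B = 0 \<or> F = mat 1"
  proof (rule ccontr)
    assume "\<not> (B = 0 \<or> F = mat 1)"
    hence "B \<noteq> 0" "D' \<noteq> 0" using D'0 by auto
    then obtain Z where Z: "D' ** Z ** B \<noteq> 0" using sandwich_nonzero[of D' B] by blast
    have "X ** P + D' ** Z ** P \<in> gen_inv {1,4} B" using h fam4(1) by blast
    hence "F + D' ** Z ** B = F" using fam4(2) unfolding T14 by simp
    thus False using Z by simp
  qed
next
  assume "B = 0 \<or> F = mat 1"
  thus "S \<subseteq> gen_inv {1,4} B"
  proof
    assume B: "B = 0" thus ?thesis using B0[OF B] unfolding T14 by simp
  next
    assume Fn: "F = mat 1"
    show ?thesis
    proof
      fix Y assume "Y \<in> S"
      hence "B ** Y ** B = B" using S_T1 unfolding T1 by blast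
      thus "Y \<in> gen_inv {1,4} B" using Fn_T1[OF Fn] unfolding T14 by simp
    qed
  qed
qed

lemma L36d: "S = gen_inv {1,4} B \<longleftrightarrow> E = mat 1 \<and> F = mat 1"
  using L36b L36c Em_nz by blast

lemma L37a: "S \<inter> gen_inv {1,2,3} B \<noteq> {} \<longleftrightarrow> P = E"
proof
  assume "S \<inter> gen_inv {1,2,3} B \<noteq> {}"
  then obtain Y where "Y \<in> S" "Y \<in> gen_inv {1,2,3} B" by blast
  thus "P = E" unfolding S_char T123 by auto
next
  assume "P = E" thus "S \<inter> gen_inv {1,2,3} B \<noteq> {}" using S_ne unfolding S_char T123 by auto
qed

lemma L37b: "S = gen_inv {1,2,3} B \<longleftrightarrow> P = E"
  using L37a S_ne unfolding S_char T123 by auto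

lemma L38a: "S \<inter> gen_inv {1,2,4} B \<noteq> {}" using XP by blast

lemma L38b: "gen_inv {1,2,4} B \<subseteq> S \<longleftrightarrow> B = 0 \<or> E = mat 1"
proof
  assume "gen_inv {1,2,4} B \<subseteq> S"
  thus "B = 0 \<or> E = mat 1" using fail1[of "gen_inv {1,2,4} B"] Xin(5) fam2(1) by blast
next
  assume "B = 0 \<or> E = mat 1"
  thus "gen_inv {1,2,4} B \<subseteq> S"
  proof
    assume B: "B = 0"
    have "gen_inv {1,2,4} B = {Y. Y ** B = F \<and> Y ** B ** Y = Y}" by (rule T124)
    also have "\<dots> = {0}" using B B0(3)[OF B] by auto
    finally show ?thesis using B0(5)[OF B] by simp
  next
    assume "E = mat 1" thus ?thesis using Em_T1 T124_T14 T14_T1 by blast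
  qed
qed

lemma L38c: "S \<subseteq> gen_inv {1,2,4} B \<longleftrightarrow> B = 0 \<or> F = mat 1"
  using L36c S_T12 T124_eq by blast

lemma L38d: "S = gen_inv {1,2,4} B \<longleftrightarrow> B = 0 \<or> (E = mat 1 \<and> F = mat 1)"
  using L38b L38c by blast

lemma L40: "X \<in> S \<longleftrightarrow> P = E"
  using X(2) unfolding S_char by (auto simp: BX)

lemma L39a: "S \<inter> gen_inv {1,3,4} B \<noteq> {} \<longleftrightarrow> P = E"
  using L35a T134_T13 L40 Xin(6) by blast

lemma L39b: "gen_inv {1,3,4} B \<subseteq> S \<longleftrightarrow> P = E \<and> (E = mat 1 \<or> F = mat 1)"
proof
  assume h: "gen_inv {1,3,4} B \<subseteq> S"
  hence "P = E" using L40 Xin(6) by blast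
  moreover have "E = mat 1 \<or> F = mat 1" using fail3[of "gen_inv {1,3,4} B"] h fam3(1) by blast
  ultimately show "P = E \<and> (E = mat 1 \<or> F = mat 1)" by blast
next
  assume "P = E \<and> (E = mat 1 \<or> F = mat 1)"
  thus "gen_inv {1,3,4} B \<subseteq> S" using L35c T134_T13 by blast
qed

lemma L39c: "S \<subseteq> gen_inv {1,3,4} B \<longleftrightarrow> B = 0 \<or> (P = E \<and> F = mat 1)"
proof -
  have "B = 0 \<Longrightarrow> P = E" using B0 by simp
  thus ?thesis using L35b L36c T134_eq by blast
qed

lemma L39d: "S = gen_inv {1,3,4} B \<longleftrightarrow> P = E \<and> F = mat 1"
proof -
  have "B = 0 \<Longrightarrow> \<not> (E = mat 1 \<or> F = mat 1)" using Em_nz Fn_nz by blast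
  thus ?thesis using L39b L39c by blast
qed

end


lemma rank_le_n: "rank (B::'a::field^'n^'m) \<le> CARD('n)"
  unfolding row_rank_def_gen by (rule dim_subset_UNIV_cart_gen)

lemma rows_range: "rows B = range (\<lambda>i. row i B)" by (auto simp: rows_def)

lemma rank_le_m: "rank (B::'a::field^'n^'m) \<le> CARD('m)"
proof -
  have fin: "finite (rows B)" by (simp add: rows_range)
  have "vec.dim (rows B) \<le> card (rows B)" by (rule vec.dim_le_card[OF vec.span_superset fin])
  also have "card (rows B) \<le> CARD('m)" unfolding rows_range by (rule card_image_le) simp
  finally show ?thesis by (simp add: row_rank_def_gen)
qed

lemma rank_full_col: "rank (B::'a::field^'n^'m) = CARD('n) \<longleftrightarrow> (\<exists>L. L ** B = mat 1)"
proof -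
  show ?thesis unfolding matrix_left_invertible_span_rows_gen row_rank_def_gen
    using vec.dim_eq_full[of "rows B"] by (simp add: vec.dimension_def card_cart_basis)
qed

lemma rank_full_row: "rank (B::'a::field^'n^'m) = CARD('m) \<longleftrightarrow> (\<exists>R. B ** R = mat 1)"
proof -
  let ?r = "\<lambda>i. row i B"
  have fin: "finite (rows B)" by (simp add: rows_range)
  have cardle: "card (rows B) \<le> CARD('m)" unfolding rows_range by (rule card_image_le) simp
  have indep_iff: "(\<forall>c. (\<Sum>i\<in>UNIV. c i *s ?r i) = 0 \<longrightarrow> (\<forall>i. c i = 0)) \<longleftrightarrow>
      (inj ?r \<and> vec.independent (rows B))"
  proof
    assume H: "\<forall>c. (\<Sum>i\<in>UNIV. c i *s ?r i) = 0 \<longrightarrow> (\<forall>i. c i = 0)"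
    have inj: "inj ?r"
    proof (rule injI, rule ccontr)
      fix i j assume eq: "?r i = ?r j" and ne: "i \<noteq> j"
      define c where "c = (\<lambda>k. if k = i then (1::'a) else if k = j then -1 else 0)"
      have "\<And>k. c k *s ?r k = (if k = i then ?r i else 0) + (if k = j then - ?r j else 0)"
        using ne by (auto simp: c_def)
      hence "(\<Sum>k\<in>UNIV. c k *s ?r k) = ?r i - ?r j"
        by (simp add: sum.distrib)
      hence "c i = 0" using H eq by simp
      thus False by (simp add: c_def)
    qed
    have "vec.independent (rows B)"
      unfolding vec.independent_explicit
    proof (intro conjI allI impI ballI)
      show "finite (rows B)" by (rule fin)
      fix u v assume u: "(\<Sum>v\<in>rows B. u v *s v) = 0" and v: "v \<in> rows B"
      have "(\<Sum>v\<in>rows B. u v *s v) = (\<Sum>i\<in>UNIV. u (?r i) *s ?r i)"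
        unfolding rows_range by (rule sum.reindex_cong[OF inj refl]) simp
      hence "(\<Sum>i\<in>UNIV. u (?r i) *s ?r i) = 0" using u by simp
      hence "\<forall>i. u (?r i) = 0" using spec[OF H, of "\<lambda>i. u (?r i)"] by simp
      thus "u v = 0" using v unfolding rows_range by auto
    qed
    thus "inj ?r \<and> vec.independent (rows B)" using inj by blast
  next
    assume h: "inj ?r \<and> vec.independent (rows B)"
    show "\<forall>c. (\<Sum>i\<in>UNIV. c i *s ?r i) = 0 \<longrightarrow> (\<forall>i. c i = 0)"
    proof (intro allI impI)
      fix c i assume c: "(\<Sum>i\<in>UNIV. c i *s ?r i) = 0"
      let ?u = "\<lambda>v. c (inv ?r v)"
      have ii: "\<And>i. inv ?r (?r i) = i" using inv_f_f[OF conjunct1[OF h]] by simp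
      have "(\<Sum>v\<in>rows B. ?u v *s v) = (\<Sum>i\<in>UNIV. ?u (?r i) *s ?r i)"
        unfolding rows_range by (rule sum.reindex_cong[OF conjunct1[OF h] refl]) simp
      also have "\<dots> = (\<Sum>i\<in>UNIV. c i *s ?r i)" by (simp only: ii)
      finally have "(\<Sum>v\<in>rows B. ?u v *s v) = 0" using c by simp
      moreover have "\<forall>c. (\<Sum>v\<in>rows B. c v *s v) = 0 \<longrightarrow> (\<forall>v\<in>rows B. c v = 0)"
        using h unfolding vec.independent_explicit by blast
      ultimately have "\<forall>v\<in>rows B. ?u v = 0" by (rule_tac mp[OF spec[of _ ?u]]) simp
      hence "?u (?r i) = 0" unfolding rows_range by blast
      thus "c i = 0" by (simp only: ii)
    qed
  qed
  have "rank B = CARD('m) \<longleftrightarrow> inj ?r \<and> vec.independent (rows B)"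
  proof
    assume h: "rank B = CARD('m)"
    have "vec.dim (rows B) \<le> card (rows B)" by (rule vec.dim_le_card[OF vec.span_superset fin])
    hence c: "card (rows B) = CARD('m)" using h cardle by (simp add: row_rank_def_gen)
    hence inj: "inj ?r" using eq_card_imp_inj_on[of UNIV ?r] unfolding rows_range by simp
    have "vec.independent (rows B)"
      by (rule vec.card_le_dim_spanning[of "rows B" "rows B"])
         (use fin c h vec.span_superset in \<open>auto simp: row_rank_def_gen\<close>)
    thus "inj ?r \<and> vec.independent (rows B)" using inj by blast
  next
    assume h: "inj ?r \<and> vec.independent (rows B)"
    have "rank B = card (rows B)" using vec.dim_eq_card_independent[of "rows B"] h by (simp add: row_rank_def_gen)
    also have "\<dots> = CARD('m)" unfolding rows_range using h by (simp add: card_image)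
    finally show "rank B = CARD('m)" .
  qed
  thus ?thesis using indep_iff matrix_right_invertible_independent_rows[of B] by simp
qed

context gsetup begin

lemma rank_m: "rank B = CARD('m) \<longleftrightarrow> E = mat 1"
proof -
  have "(\<exists>R. B ** R = mat 1) \<longleftrightarrow> E = mat 1"
  proof
    assume "\<exists>R. B ** R = mat 1"
    then obtain R where R: "B ** R = mat 1" by blast
    have "E = E ** (B ** R)" using R by simp
    also have "\<dots> = mat 1" by (metis R EB matrix_mul_assoc)
    finally show "E = mat 1" .
  qed (auto simp: E_def)
  thus ?thesis using rank_full_row by blast
qed

lemma rank_n: "rank B = CARD('n) \<longleftrightarrow> F = mat 1"
proof -
  have "(\<exists>L. L ** B = mat 1) \<longleftrightarrow> F = mat 1"
  proof
    assume "\<exists>L. L ** B = mat 1"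
    then obtain L where L: "L ** B = mat 1" by blast
    have "F = (L ** B) ** F" using L by simp
    also have "\<dots> = mat 1" by (metis L BF matrix_mul_assoc)
    finally show "F = mat 1" .
  qed (auto simp: F_def)
  thus ?thesis using rank_full_col by blast
qed

lemma rank_min: "rank B = min CARD('m) CARD('n) \<longleftrightarrow> E = mat 1 \<or> F = mat 1"
  using rank_m rank_n rank_le_m[of B] rank_le_n[of B] by (auto simp: min_def)

end


lemma colspace_mult: "colspace (Y ** Z) \<subseteq> colspace Y"
  unfolding colspace_def by (auto simp: matrix_vector_mul_assoc[symmetric])

context gsetup begin

definition "K = ctrans A ** A"
definition "Ki = Ai ** ctrans Ai"

lemma cAi: "ctrans A ** ctrans Ai = mat 1" "ctrans Ai ** ctrans A = mat 1"
  using arg_cong[OF AiA, of ctrans] arg_cong[OF AAi, of ctrans] by (simp_all add: ctrans_mult)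

lemma KKi: "K ** Ki = mat 1" "Ki ** K = mat 1"
proof -
  have "K ** Ki = ctrans A ** (A ** Ai) ** ctrans Ai" by (simp add: K_def Ki_def matrix_mul_assoc)
  thus "K ** Ki = mat 1" using AAi cAi by simp
  have "Ki ** K = Ai ** (ctrans Ai ** ctrans A) ** A" by (simp add: K_def Ki_def matrix_mul_assoc)
  thus "Ki ** K = mat 1" using AiA cAi by simp
qed

lemma Kh: "ctrans K = K" by (simp add: K_def ctrans_mult)

lemma PE_herm: "P = E \<longleftrightarrow> ctrans (A ** E ** Ai) = A ** E ** Ai"
proof
  assume "P = E" thus "ctrans (A ** E ** Ai) = A ** E ** Ai" using P_herm by simp
next
  assume h: "ctrans (A ** E ** Ai) = A ** E ** Ai"
  have "A ** B ** X ** Ai = A ** E ** Ai" by (simp add: E_def matrix_mul_assoc)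
  hence "X \<in> S" unfolding S_def using X(1,2) h by simp
  thus "P = E" using L40 by blast
qed

lemma herm_comm: "ctrans (A ** E ** Ai) = A ** E ** Ai \<longleftrightarrow> E ** K = K ** E"
proof
  assume h: "ctrans (A ** E ** Ai) = A ** E ** Ai"
  hence h': "ctrans Ai ** E ** ctrans A = A ** E ** Ai" using Eh by (simp add: ctrans_mult matrix_mul_assoc)
  have "E ** K = (ctrans A ** ctrans Ai) ** E ** (ctrans A ** A)" using cAi by (simp add: K_def)
  also have "\<dots> = ctrans A ** (ctrans Ai ** E ** ctrans A) ** A" by (simp add: matrix_mul_assoc)
  also have "\<dots> = ctrans A ** (A ** E ** Ai) ** A" using h' by simp
  also have "\<dots> = ctrans A ** A ** E ** (Ai ** A)" by (simp add: matrix_mul_assoc)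
  also have "\<dots> = K ** E" using AiA by (simp add: K_def)
  finally show "E ** K = K ** E" .
next
  assume h: "E ** K = K ** E"
  have "ctrans (A ** E ** Ai) = ctrans Ai ** E ** ctrans A" using Eh by (simp add: ctrans_mult matrix_mul_assoc)
  also have "\<dots> = ctrans Ai ** E ** ctrans A ** (A ** Ai)" using AAi by simp
  also have "\<dots> = ctrans Ai ** (E ** K) ** Ai" by (simp add: K_def matrix_mul_assoc)
  also have "\<dots> = ctrans Ai ** (K ** E) ** Ai" using h by simp
  also have "\<dots> = (ctrans Ai ** ctrans A) ** A ** E ** Ai" by (simp add: K_def matrix_mul_assoc)
  also have "\<dots> = A ** E ** Ai" using cAi by simp
  finally show "ctrans (A ** E ** Ai) = A ** E ** Ai" .
qed

lemma comm_col: "E ** K = K ** E \<longleftrightarrow> colspace (K ** B) = colspace B"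
proof
  assume h: "E ** K = K ** E"
  have KB: "K ** B = B ** (X ** K ** B)"
  proof -
    have "K ** B = K ** E ** B" using EB by (simp add: matrix_mul_assoc[symmetric])
    also have "\<dots> = E ** K ** B" using h by simp
    also have "\<dots> = B ** (X ** K ** B)" by (simp add: E_def matrix_mul_assoc)
    finally show ?thesis .
  qed
  have KiE: "Ki ** E = E ** Ki"
  proof -
    have "Ki ** E = Ki ** E ** (K ** Ki)" using KKi by simp
    also have "\<dots> = Ki ** (E ** K) ** Ki" by (simp add: matrix_mul_assoc)
    also have "\<dots> = Ki ** (K ** E) ** Ki" using h by simp
    also have "\<dots> = (Ki ** K) ** E ** Ki" by (simp add: matrix_mul_assoc)
    also have "\<dots> = E ** Ki" using KKi by simp
    finally show ?thesis .
  qed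
  have BB: "B = K ** B ** (X ** Ki ** B)"
  proof -
    have "K ** B ** (X ** Ki ** B) = K ** (Ki ** E) ** B" using KiE by (simp add: E_def matrix_mul_assoc)
    also have "\<dots> = (K ** Ki) ** (E ** B)" by (simp add: matrix_mul_assoc)
    also have "\<dots> = B" using KKi EB by simp
    finally show ?thesis by simp
  qed
  show "colspace (K ** B) = colspace B"
    using colspace_mult[of B "X ** K ** B"] colspace_mult[of "K ** B" "X ** Ki ** B"] KB BB
    by (metis subset_antisym)
next
  assume h: "colspace (K ** B) = colspace B"
  have EKB: "E ** (K ** B) = K ** B"
    unfolding matrix_eq
  proof
    fix x
    have "(K ** B) *v x \<in> colspace B" using h unfolding colspace_def by blast
    then obtain y where y: "(K ** B) *v x = B *v y" unfolding colspace_def by blast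
    have "(E ** (K ** B)) *v x = E *v ((K ** B) *v x)" by (simp add: matrix_vector_mul_assoc)
    also have "\<dots> = E *v (B *v y)" using y by simp
    also have "\<dots> = (E ** B) *v y" by (simp add: matrix_vector_mul_assoc)
    also have "\<dots> = (K ** B) *v x" using y EB by simp
    finally show "(E ** (K ** B)) *v x = (K ** B) *v x" .
  qed
  have EKE: "E ** K ** E = K ** E"
  proof -
    have "E ** K ** E = E ** (K ** B) ** X" by (simp add: E_def matrix_mul_assoc)
    also have "\<dots> = K ** E" using EKB by (simp add: E_def matrix_mul_assoc)
    finally show ?thesis .
  qed
  have "E ** K = ctrans (K ** E)" using Eh Kh by (simp add: ctrans_mult)
  also have "\<dots> = ctrans (E ** K ** E)" using EKE by simp
  also have "\<dots> = E ** K ** E" using Eh Kh by (simp add: ctrans_mult matrix_mul_assoc)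
  also have "\<dots> = K ** E" using EKE .
  finally show "E ** K = K ** E" .
qed

lemma R1_iff: "colspace (ctrans A ** A ** B) = colspace B \<longleftrightarrow> P = E"
  using PE_herm herm_comm comm_col by (simp add: K_def)

end


lemma cancel_both:
  assumes "P' ** P = mat 1" "Q ** Q' = mat 1"
  shows "P ** U ** Q = P ** V ** Q \<longleftrightarrow> U = V"
proof
  assume "P ** U ** Q = P ** V ** Q"
  hence "P ** (U ** Q) = P ** (V ** Q)" by (simp add: matrix_mul_assoc)
  hence "U ** Q = V ** Q" by (rule matrix_eq_cancel_left[OF assms(1)])
  thus "U = V" by (rule matrix_eq_cancel_right[OF assms(2)])
qed simp


context gsetup begin

lemma t1: "gen_inv {1} B \<subseteq> S \<longleftrightarrow> E = mat 1" using L33 S_T1 by blast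
lemma t12: "gen_inv {1,2} B \<subseteq> S \<longleftrightarrow> B = 0 \<or> E = mat 1" using L34 S_T12 by blast
lemma t13: "gen_inv {1,3} B \<subseteq> S \<longleftrightarrow> P = E \<and> (E = mat 1 \<or> F = mat 1)" by (rule L35c)
lemma s123: "S \<subseteq> gen_inv {1,2,3} B \<longleftrightarrow> P = E" using L37a L37b S_ne by blast
lemma t123: "gen_inv {1,2,3} B \<subseteq> S \<longleftrightarrow> P = E" using L37b L40 Xin(7) by blast
lemma B0R: "B = 0 \<Longrightarrow> P = E" using B0 by simp

end

theorem theorem4p2:
  fixes A :: "complex^'m^'m" and B :: "complex^'n^'m" and C :: "complex^'n^'n"
  assumes invA: "invertible A" and invC: "invertible C"
  defines "M \<equiv> A ** B ** C"
  defines "R1 \<equiv> (colspace (ctrans A ** A ** B) = colspace B)"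
  defines "m \<equiv> CARD('m)" and "n \<equiv> CARD('n)"
  defines "G \<equiv> gen_inv {1,2,3} M"
  defines "T \<equiv> tr_set A B C"
  shows
   "(G \<subseteq> T {1}) \<and>
    ((G \<supseteq> T {1}) = (G = T {1})) \<and> ((G = T {1}) = (rank B = m))
    \<and> (G \<subseteq> T {1,2}) \<and>
    ((G \<supseteq> T {1,2}) = (G = T {1,2})) \<and> ((G = T {1,2}) = (B = 0 \<or> rank B = m))
    \<and> ((G \<inter> T {1,3} \<noteq> {}) = (G \<subseteq> T {1,3})) \<and> ((G \<subseteq> T {1,3}) = R1) \<and>
    ((G \<supseteq> T {1,3}) = (G = T {1,3})) \<and> ((G = T {1,3}) = (R1 \<and> rank B = min m n))
    \<and> (G \<inter> T {1,4} \<noteq> {}) \<and>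
    ((G \<supseteq> T {1,4}) = (rank B = m)) \<and>
    ((G \<subseteq> T {1,4}) = (B = 0 \<or> rank B = n)) \<and>
    ((G = T {1,4}) = (rank B = m \<and> m = n))
    \<and> ((G \<inter> T {1,2,3} \<noteq> {}) = (G = T {1,2,3})) \<and> ((G = T {1,2,3}) = R1)
    \<and> (G \<inter> T {1,2,4} \<noteq> {}) \<and>
    ((G \<supseteq> T {1,2,4}) = (B = 0 \<or> rank B = m)) \<and>
    ((G \<subseteq> T {1,2,4}) = (B = 0 \<or> rank B = n)) \<and>
    ((G = T {1,2,4}) = (B = 0 \<or> (rank B = m \<and> m = n)))
    \<and> ((G \<inter> T {1,3,4} \<noteq> {}) = R1) \<and>
    ((G \<supseteq> T {1,3,4}) = (R1 \<and> rank B = min m n)) \<and>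
    ((G \<subseteq> T {1,3,4}) = (B = 0 \<or> (R1 \<and> rank B = n))) \<and>
    ((G = T {1,3,4}) = (R1 \<and> rank B = n))
    \<and> ((matrix_inv C ** mp_inv B ** matrix_inv A \<in> G) = R1)"
proof -
  interpret g: gsetup A B by unfold_locales (rule invA)
  define Ci where "Ci = matrix_inv C"
  have CiC: "Ci ** C = mat 1" and CCi: "C ** Ci = mat 1"
    using inv_left[OF invC] inv_right[OF invC] by (simp_all add: Ci_def)
  define f where "f = (\<lambda>Y. Ci ** Y ** g.Ai)"
  have finj: "inj f"
  proof (rule injI)
    fix Y Y' assume "f Y = f Y'"
    thus "Y = Y'" unfolding f_def using cancel_both[OF CCi g.AiA] by blast
  qed
  have Tk: "\<And>k. T k = f ` gen_inv k B" by (simp add: T_def tr_set_def f_def Ci_def g.Ai_def)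
  have key: "\<And>Y. f Y \<in> G \<longleftrightarrow> Y \<in> g.S"
  proof -
    fix Y
    have e1: "M ** f Y ** M = A ** (B ** Y ** B) ** C"
    proof -
      have "M ** f Y ** M = A ** B ** (C ** Ci) ** Y ** (g.Ai ** A) ** B ** C"
        by (simp add: M_def f_def matrix_mul_assoc)
      also have "\<dots> = A ** (B ** Y ** B) ** C" using CCi g.AiA by (simp add: matrix_mul_assoc)
      finally show ?thesis .
    qed
    have e2: "f Y ** M ** f Y = Ci ** (Y ** B ** Y) ** g.Ai"
    proof -
      have "f Y ** M ** f Y = Ci ** Y ** (g.Ai ** A) ** B ** (C ** Ci) ** Y ** g.Ai"
        by (simp add: M_def f_def matrix_mul_assoc)
      also have "\<dots> = Ci ** (Y ** B ** Y) ** g.Ai" using CCi g.AiA by (simp add: matrix_mul_assoc)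
      finally show ?thesis .
    qed
    have e3: "M ** f Y = A ** B ** Y ** g.Ai"
    proof -
      have "M ** f Y = A ** B ** (C ** Ci) ** Y ** g.Ai"
        by (simp add: M_def f_def matrix_mul_assoc)
      also have "\<dots> = A ** B ** Y ** g.Ai" using CCi by simp
      finally show ?thesis .
    qed
    have m1: "M = A ** B ** C" by (simp add: M_def)
    have c1: "M ** f Y ** M = M \<longleftrightarrow> B ** Y ** B = B"
      unfolding e1 using cancel_both[OF g.AiA CCi, of "B ** Y ** B" B] by (simp add: M_def matrix_mul_assoc)
    have c2: "f Y ** M ** f Y = f Y \<longleftrightarrow> Y ** B ** Y = Y"
      unfolding e2 using cancel_both[OF CCi g.AiA, of "Y ** B ** Y" Y] by (simp add: f_def)
    show "f Y \<in> G \<longleftrightarrow> Y \<in> g.S"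
      unfolding G_def gen_inv_def g.S_def using c1 c2 e3 by simp
  qed
  have GS: "G = f ` g.S"
  proof
    show "f ` g.S \<subseteq> G" using key by blast
    show "G \<subseteq> f ` g.S"
    proof
      fix x assume x: "x \<in> G"
      have "f (C ** x ** A) = (Ci ** C) ** x ** (A ** g.Ai)" by (simp add: f_def matrix_mul_assoc)
      hence fx: "f (C ** x ** A) = x" using CiC g.AAi by simp
      hence "C ** x ** A \<in> g.S" using key x by metis
      thus "x \<in> f ` g.S" using fx by (metis imageI)
    qed
  qed
  have sub: "\<And>U V. f ` U \<subseteq> f ` V \<longleftrightarrow> U \<subseteq> V" using inj_image_subset_iff[OF finj] by blast
  have eq: "\<And>U V. f ` U = f ` V \<longleftrightarrow> U = V" using inj_image_eq_iff[OF finj] by blast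
  have int: "\<And>U V. f ` U \<inter> f ` V = f ` (U \<inter> V)" using image_Int[OF finj] by blast
  have mem: "matrix_inv C ** mp_inv B ** matrix_inv A \<in> G \<longleftrightarrow> g.X \<in> g.S"
    using key by (simp add: f_def Ci_def g.Ai_def g.X_def)
  have mn: "(g.E = mat 1 \<and> CARD('m) = CARD('n)) \<longleftrightarrow> (g.E = mat 1 \<and> g.F = mat 1)"
    using g.rank_m g.rank_n by auto
  note L = g.S_T1 g.S_T12 g.t1 g.t12 g.L35a g.L35b g.t13 g.L36a g.L36b g.L36c
    g.L37a g.s123 g.t123 g.L38a g.L38b g.L38c g.L39a g.L39b g.L39c g.L40
  have nz: "g.E = mat 1 \<Longrightarrow> B \<noteq> 0" "g.F = mat 1 \<Longrightarrow> B \<noteq> 0" using g.Em_nz g.Fn_nz by auto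
  have eqS: "\<And>V. (g.S = V) = (g.S \<subseteq> V \<and> V \<subseteq> g.S)" by blast
  show ?thesis
    unfolding GS Tk int sub eq image_is_empty R1_def g.R1_iff m_def n_def g.rank_min g.rank_m g.rank_n
      mem[unfolded GS] eqS
    apply (simp only: L mn)
    using g.B0R nz by blast
qed


end
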